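(* Let $q=2$, $0\le J\le\pi/4$, and $U(J)=\begin{pmatrix}e^{-iJ}&0&0&0\\0&0&-ie^{iJ}&0\\0&-ie^{iJ}&0&0\\0&0&0&e^{-iJ}\end{pmatrix}$ in the basis $|00\rangle,|01\rangle,|10\rangle,|11\rangle$, so that $e_p(U(J))=\frac23\cos^2(2J)$. For a single-qubit unitary $u$, let $\Lambda(u)$ be the largest modulus of the nontrivial eigenvalues of the map $a\mapsto u\,\mathcal{M}_+^{U(J)}(a)\,u^\dagger$. (i) Over the family $w(\theta,\psi)=\begin{pmatrix}\cos\frac\theta2&-e^{i\psi/2}\sin\frac\theta2\\ e^{-i\psi/2}\sin\frac\theta2&\cos\frac\theta2\end{pmatrix}$, $\theta\in[0,\pi]$, $\psi\in[0,4\pi]$, one has $\min_{\theta,\psi}\Lambda(w)=\sqrt{\sin 2J}$, i.e. $-\ln\min\Lambda=-\frac14\ln\bigl(1-\tfrac32 e_p(U(J))\bigr)$. (ii) Over the family $v(\phi,\psi)=\frac1{\sqrt2}\begin{pmatrix}e^{i\phi/2}&-e^{i\psi/2}\\ e^{-i\psi/2}&e^{-i\phi/2}\end{pmatrix}$, $\phi,\psi\in[0,4\pi]$, the nontrivial eigenvalues are the roots of $\lambda^3-(\lambda^2-\lambda)\cos\phi\,\sin 2J-\sin^2 2J=0$, and $\min_{\phi,\psi}\Lambda(v)=\sin^{2/3}(2J)$, attained at $\phi=\pi/2$; i.e. $-\ln\min\Lambda=-\frac13\ln\bigl(1-\tfrac32 e_p(U(J))\bigr)$.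
   Context: For a unitary $U$ on $\mathbb{C}^2\otimes\mathbb{C}^2$, $\mathcal{M}_+^U(a)=\frac12\operatorname{tr}_1[U^\dagger(a\otimes I)U]$ on $2\times2$ matrices; it fixes $I$ and preserves traceless matrices, and so does $a\mapsto u\mathcal{M}_+^U(a)u^\dagger$; the nontrivial eigenvalues of such a map are the three eigenvalues of its restriction to traceless matrices. (For $U(J)$ one has $\mathcal{M}_+^{U(J)}(a)=\begin{pmatrix}a_{00}&\sin(2J)a_{01}\\ \sin(2J)a_{10}&a_{11}\end{pmatrix}$.) The entangling power $e_p$ is $e_p(U)=\frac{E(U)+E(US)-E(S)}{E(S)}$ with $E(U)=1-q^{-4}\operatorname{tr}[(U^{R_1}U^{R_1\dagger})^2]$, $\langle\beta\alpha|U^{R_1}|ji\rangle=\langle i\alpha|U|j\beta\rangle$, $S$ the swap, $q=2$. *)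

theory Defs
  imports Complex_Main "Jordan_Normal_Form.Matrix"
begin

text \<open>Conventions: complex matrices from Jordan_Normal_Form. Two-qubit basis
  |00>,|01>,|10>,|11> is indexed by 2*i1 + i2 (first factor i1, second i2).\<close>

definition mtrace :: "complex mat \<Rightarrow> complex" where
  "mtrace A = (\<Sum>i<dim_row A. A $$ (i,i))"

definition adj :: "complex mat \<Rightarrow> complex mat" where
  "adj A = mat (dim_col A) (dim_row A) (\<lambda>(i,j). cnj (A $$ (j,i)))"

definition tensor_I :: "complex mat \<Rightarrow> complex mat" where
  "tensor_I a = mat 4 4 (\<lambda>(r,c). a $$ (r div 2, c div 2) * (if r mod 2 = c mod 2 then 1 else 0))"

definition ptrace1 :: "complex mat \<Rightarrow> complex mat" where
  "ptrace1 X = mat 2 2 (\<lambda>(j,k). \<Sum>i<2. X $$ (2*i+j, 2*i+k))"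

definition Mplus :: "complex mat \<Rightarrow> complex mat \<Rightarrow> complex mat" where
  "Mplus U a = (1/2 :: complex) \<cdot>\<^sub>m ptrace1 (adj U * tensor_I a * U)"

text \<open>Nontrivial eigenvalues of a map on 2x2 matrices that preserves traceless
  matrices: the eigenvalues of its restriction to traceless matrices.\<close>
definition nontriv_eigs :: "(complex mat \<Rightarrow> complex mat) \<Rightarrow> complex set" where
  "nontriv_eigs \<Phi> = {l. \<exists>a \<in> carrier_mat 2 2. mtrace a = 0 \<and> a \<noteq> 0\<^sub>m 2 2 \<and> \<Phi> a = l \<cdot>\<^sub>m a}"

definition Lam :: "complex mat \<Rightarrow> complex mat \<Rightarrow> real" where
  "Lam U u = Max (cmod ` nontriv_eigs (\<lambda>a. u * Mplus U a * adj u))"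

definition UJ :: "real \<Rightarrow> complex mat" where
  "UJ J = (let e = cis (-J); f = - \<i> * cis J in
     mat_of_rows_list 4 [[e,0,0,0],[0,0,f,0],[0,f,0,0],[0,0,0,e]])"

definition wmat :: "real \<Rightarrow> real \<Rightarrow> complex mat" where
  "wmat \<theta> \<psi> = mat_of_rows_list 2
     [[complex_of_real (cos (\<theta>/2)), - cis (\<psi>/2) * complex_of_real (sin (\<theta>/2))],
      [cis (-\<psi>/2) * complex_of_real (sin (\<theta>/2)), complex_of_real (cos (\<theta>/2))]]"

definition vmat :: "real \<Rightarrow> real \<Rightarrow> complex mat" where
  "vmat \<phi> \<psi> = (1 / complex_of_real (sqrt 2)) \<cdot>\<^sub>m mat_of_rows_list 2
     [[cis (\<phi>/2), - cis (\<psi>/2)], [cis (-\<psi>/2), cis (-\<phi>/2)]]"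

text \<open>Realignment: <beta alpha|U^R1|j i> = <i alpha|U|j beta>.\<close>
definition realign :: "complex mat \<Rightarrow> complex mat" where
  "realign U = mat 4 4 (\<lambda>(r,c). U $$ (2*(c mod 2) + r mod 2, 2*(c div 2) + r div 2))"

definition swap :: "complex mat" where
  "swap = mat 4 4 (\<lambda>(r,c). if r = 2*(c mod 2) + c div 2 then 1 else 0)"

definition Eop :: "complex mat \<Rightarrow> complex" where
  "Eop U = 1 - (1 / 2^4) * mtrace ((realign U * adj (realign U)) * (realign U * adj (realign U)))"

definition ep :: "complex mat \<Rightarrow> complex" where
  "ep U = (Eop U + Eop (U * swap) - Eop swap) / Eop swap"

end

theory Submission imports Defs "Jordan_Normal_Form.Determinant" "HOL-Computational_Algebra.Fundamental_Theorem_Algebra" begin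

lemma sum2: "(\<Sum>k<2. f k) = f 0 + f (1::nat)" by (simp add: eval_nat_numeral)
lemma sum4: "(\<Sum>k<4. f k) = f 0 + f 1 + f 2 + f (3::nat)" by (simp add: eval_nat_numeral)
lemma sum4': "(\<Sum>k\<in>{0..<4}. f k) = f 0 + f 1 + f 2 + f (3::nat)" by (simp add: eval_nat_numeral atLeast0LessThan)
lemma sum2': "(\<Sum>k\<in>{0..<2}. f k) = f 0 + f (1::nat)" by (simp add: eval_nat_numeral atLeast0LessThan)
lemma less4: "(i::nat) < 4 \<longleftrightarrow> i = 0 \<or> i = 1 \<or> i = 2 \<or> i = 3" by auto
lemma less2: "(i::nat) < 2 \<longleftrightarrow> i = 0 \<or> i = 1" by auto

lemma UJ_eq: "UJ J = mat 4 4 (\<lambda>(i,j). if (i,j)=(0,0) \<or> (i,j)=(3,3) then cis (-J)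
   else if (i,j)=(1,2) \<or> (i,j)=(2,1) then - \<i> * cis J else 0)"
  unfolding UJ_def Let_def mat_of_rows_list_def
  by (rule eq_matI) (auto simp: less4)

lemma det2: "det (mat 2 2 g) = g (0,0) * g (1,1) - g (0,1) * g (1,0)"
  apply (subst laplace_expansion_column[where j=0])
    apply auto
  apply (simp add: sum.lessThan_Suc cofactor_def eval_nat_numeral det_single mat_delete_def insert_index_def)
  done

lemma det3: "det (mat 3 3 f) = f (0,0) * (f (1,1) * f (2,2) - f (1,2) * f (2,1))
   - f (0,1) * (f (1,0) * f (2,2) - f (1,2) * f (2,0)) + f (0,2) * (f (1,0) * f(2,1) - f (1,1) * f (2,0))"
  apply (subst laplace_expansion_column[where j=0])
    apply auto
  apply (simp add: sum.lessThan_Suc cofactor_def mat_delete_def)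
  apply (simp add: det2[unfolded numeral_2_eq_2] insert_index_def eval_nat_numeral)
  apply (simp add: algebra_simps)
  done

lemma ker3:
  fixes a b c d e f g h k :: complex
  shows "(\<exists>x y z. (x,y,z) \<noteq> (0,0,0) \<and> a*x + b*y + c*z = 0 \<and> d*x + e*y + f*z = 0 \<and> g*x + h*y + k*z = 0)
     \<longleftrightarrow> a*(e*k - f*h) - b*(d*k - f*g) + c*(d*h - e*g) = 0"
proof -
  define F where "F = (\<lambda>(i::nat,j::nat). [[a,b,c],[d,e,f],[g,h,k]] ! i ! j)"
  define A where "A = mat 3 3 F"
  have A: "A \<in> carrier_mat 3 3" unfolding A_def by auto
  have "det A = a*(e*k - f*h) - b*(d*k - f*g) + c*(d*h - e*g)"
    unfolding A_def det3 F_def by simp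
  moreover have "(\<exists>v. v \<in> carrier_vec 3 \<and> v \<noteq> 0\<^sub>v 3 \<and> A *\<^sub>v v = 0\<^sub>v 3) \<longleftrightarrow>
     (\<exists>x y z. (x,y,z) \<noteq> (0,0,0) \<and> a*x + b*y + c*z = 0 \<and> d*x + e*y + f*z = 0 \<and> g*x + h*y + k*z = 0)"
  proof
    assume "\<exists>v. v \<in> carrier_vec 3 \<and> v \<noteq> 0\<^sub>v 3 \<and> A *\<^sub>v v = 0\<^sub>v 3"
    then obtain v where v: "v \<in> carrier_vec 3" "v \<noteq> 0\<^sub>v 3" "A *\<^sub>v v = 0\<^sub>v 3" by blast
    have nz: "(v$0, v$1, v$2) \<noteq> (0,0,0)"
    proof
      assume "(v$0, v$1, v$2) = (0,0,0)"
      then have "v = 0\<^sub>v 3" using v(1) by (intro eq_vecI) (auto simp: less_Suc_eq eval_nat_numeral)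
      with v(2) show False by simp
    qed
    have "\<And>i. i < 3 \<Longrightarrow> (A *\<^sub>v v) $ i = 0" using v(3) by simp
    then have "(A *\<^sub>v v) $ 0 = 0" "(A *\<^sub>v v) $ 1 = 0" "(A *\<^sub>v v) $ 2 = 0" by auto
    then show "\<exists>x y z. (x,y,z) \<noteq> (0,0,0) \<and> a*x + b*y + c*z = 0 \<and> d*x + e*y + f*z = 0 \<and> g*x + h*y + k*z = 0"
      using v(1) nz unfolding A_def F_def
      by (intro exI[of _ "v$0"] exI[of _ "v$1"] exI[of _ "v$2"])
         (simp add: scalar_prod_def sum.atLeast0_lessThan_Suc eval_nat_numeral row_def)
  next
    assume "\<exists>x y z. (x,y,z) \<noteq> (0,0,0) \<and> a*x + b*y + c*z = 0 \<and> d*x + e*y + f*z = 0 \<and> g*x + h*y + k*z = 0"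
    then obtain x y z where xyz: "(x,y,z) \<noteq> (0,0,0)" "a*x + b*y + c*z = 0" "d*x + e*y + f*z = 0" "g*x + h*y + k*z = 0" by blast
    define v where "v = vec 3 (\<lambda>i. [x,y,z] ! i)"
    have "v \<in> carrier_vec 3" unfolding v_def by simp
    moreover have "v \<noteq> 0\<^sub>v 3"
    proof
      assume "v = 0\<^sub>v 3"
      then have "v$0 = 0" "v$1 = 0" "v$2 = 0" by auto
      then show False using xyz(1) unfolding v_def by (simp add: vec_of_list_index)
    qed
    moreover have "A *\<^sub>v v = 0\<^sub>v 3"
      apply (rule eq_vecI)
      using xyz unfolding A_def F_def v_def
      by (auto simp: scalar_prod_def sum.atLeast0_lessThan_Suc eval_nat_numeral row_def less_Suc_eq vec_of_list_index)
    ultimately show "\<exists>v. v \<in> carrier_vec 3 \<and> v \<noteq> 0\<^sub>v 3 \<and> A *\<^sub>v v = 0\<^sub>v 3" by blast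
  qed
  ultimately show ?thesis using det_0_iff_vec_prod_zero[OF A] by simp
qed

lemma cis_facts:
  "cnj (cis (-J)) * cis(-J) = 1" "cnj (cis J) * cis J = 1" "cnj (cis J) * cis(-J) = cis(-(2*J))"
  "cnj (cis (-J)) * cis J = cis(2*J)"
  by (simp_all add: cis_cnj cis_mult)

lemma cis_diff: "cis (2*J) - cis(-(2*J)) = 2 * \<i> * complex_of_real (sin (2*J))"
  by (simp add: complex_eq_iff)

lemma g1: "(x::complex) * a * y - \<i> * z * a * (\<i> * w) = a * (x * y) + a * (z * w)"
  by (simp add: algebra_simps)
lemma g2: "\<i> * (z::complex) * a * y - x * a * (\<i> * w) = - \<i> * a * (x * w - z * y)"
  by (simp add: algebra_simps)

lemma g3: "- \<i> * a * (2 * \<i> * x) = (x::complex) * a * 2"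
  by (simp add: algebra_simps)

lemma cmul1: "cnj (cis (- J)) * a * cis (- J) - \<i> * cnj (cis J) * a * (\<i> * cis J) = a * 2"
proof -
  have "cnj (cis (- J)) * a * cis (- J) - \<i> * cnj (cis J) * a * (\<i> * cis J)
     = a * (cnj (cis (-J)) * cis(-J)) + a * (cnj (cis J) * cis J)" by (rule g1)
  also have "\<dots> = a * 2" unfolding cis_facts by simp
  finally show ?thesis .
qed

lemma cmul2: "\<i> * cnj (cis J) * a * cis (- J) - cnj (cis (- J)) * a * (\<i> * cis J) = complex_of_real (sin (2 * J)) * a * 2"
proof -
  have "\<i> * cnj (cis J) * a * cis (- J) - cnj (cis (- J)) * a * (\<i> * cis J)
     = - \<i> * a * (cnj (cis (-J)) * cis J - cnj (cis J) * cis(-J))" by (rule g2)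
  also have "\<dots> = - \<i> * a * (2 * \<i> * complex_of_real (sin (2*J)))" unfolding cis_facts cis_diff by (rule refl)
  also have "\<dots> = complex_of_real (sin (2 * J)) * a * 2" by (rule g3)
  finally show ?thesis .
qed

lemma Mplus_UJ: assumes "a \<in> carrier_mat 2 2"
  shows "Mplus (UJ J) a = mat 2 2 (\<lambda>(i,j). if i = j then a $$ (i,j) else complex_of_real (sin (2*J)) * a $$ (i,j))"
proof (rule eq_matI)
  fix i j assume "i < dim_row (mat 2 2 (\<lambda>(i,j). if i = j then a $$ (i,j) else complex_of_real (sin (2*J)) * a $$ (i,j)))"
    "j < dim_col (mat 2 2 (\<lambda>(i,j). if i = j then a $$ (i,j) else complex_of_real (sin (2*J)) * a $$ (i,j)))"
  then have ij: "i < 2" "j < 2" by auto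
  show "Mplus (UJ J) a $$ (i, j) = mat 2 2 (\<lambda>(i,j). if i = j then a $$ (i,j) else complex_of_real (sin (2*J)) * a $$ (i,j)) $$ (i, j)"
    using ij assms unfolding Mplus_def ptrace1_def adj_def tensor_I_def UJ_eq
    by (auto simp add: sum2 sum4 sum4' scalar_prod_def less2) (rule cmul1 cmul2)+
qed (auto simp: Mplus_def ptrace1_def)

definition Mdet :: "complex \<Rightarrow> complex \<Rightarrow> complex \<Rightarrow> complex \<Rightarrow> complex \<Rightarrow> complex \<Rightarrow> complex \<Rightarrow> complex \<Rightarrow> complex \<Rightarrow> complex \<Rightarrow> complex \<Rightarrow> complex \<Rightarrow> complex \<Rightarrow> complex \<Rightarrow> complex" where
  "Mdet s l x1 x2 x3 x4 x5 x6 x7 x8 x9 x10 x11 x12 = (s*x1 - l)*((s*x2 - l)*(x3 - x4 - l) - (x5 - x6)*(s*x7))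
     - (s*x8)*((s*x9)*(x3 - x4 - l) - (x5 - x6)*(s*x10))
     + (x11 - x12)*((s*x9)*(s*x7) - (s*x2 - l)*(s*x10))"

definition Mx :: "complex \<Rightarrow> complex \<Rightarrow> complex \<Rightarrow> complex \<Rightarrow> complex \<Rightarrow> complex \<Rightarrow> complex" where
  "Mx s p q r t l = Mdet s l (p*cnj t) (t*cnj p) (p*cnj p) (q*cnj q) (r*cnj p) (t*cnj q) (q*cnj p) (q*cnj r)
     (r*cnj q) (p*cnj q) (p*cnj r) (q*cnj t)"

lemma eig_general:
  fixes u :: "complex mat"
  assumes u: "u \<in> carrier_mat 2 2" "u$$(0,0) = p" "u$$(0,1) = q" "u$$(1,0) = r" "u$$(1,1) = t"
    and orth: "p * cnj q + r * cnj t = 0" and nrm: "p*cnj p + r*cnj r = q*cnj q + t*cnj t"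
  shows "l \<in> nontriv_eigs (\<lambda>a. u * Mplus (UJ J) a * adj u) \<longleftrightarrow> Mx (complex_of_real (sin (2*J))) p q r t l = 0"
proof -
  define s where "s = complex_of_real (sin (2*J))"
  have Phi: "u * Mplus (UJ J) a * adj u = mat 2 2 (\<lambda>(i,j). 
      [[p,q],[r,t]]!i!0 * a$$(0,0) * cnj ([[p,q],[r,t]]!j!0) + [[p,q],[r,t]]!i!0 * (s*a$$(0,1)) * cnj ([[p,q],[r,t]]!j!1)
    + [[p,q],[r,t]]!i!1 * (s*a$$(1,0)) * cnj ([[p,q],[r,t]]!j!0) + [[p,q],[r,t]]!i!1 * a$$(1,1) * cnj ([[p,q],[r,t]]!j!1))"
    if a: "a \<in> carrier_mat 2 2" for a
    apply (rule eq_matI)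
    using u a unfolding Mplus_UJ[OF a] adj_def s_def
    by (auto simp: scalar_prod_def sum2' less2 algebra_simps)
  have ker: "Mx s p q r t l = 0 \<longleftrightarrow> (\<exists>x y z. (x,y,z) \<noteq> (0,0,0) \<and>
     (s*(p*cnj t) - l)*x + (s*(q*cnj r))*y + (p*cnj r - q*cnj t)*z = 0 \<and>
     (s*(r*cnj q))*x + (s*(t*cnj p) - l)*y + (r*cnj p - t*cnj q)*z = 0 \<and>
     (s*(p*cnj q))*x + (s*(q*cnj p))*y + (p*cnj p - q*cnj q - l)*z = 0)"
    unfolding Mx_def Mdet_def by (rule ker3[symmetric])
  show ?thesis
    unfolding s_def[symmetric] ker
  proof
    assume "l \<in> nontriv_eigs (\<lambda>a. u * Mplus (UJ J) a * adj u)"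
    then obtain a where a: "a \<in> carrier_mat 2 2" "mtrace a = 0" "a \<noteq> 0\<^sub>m 2 2" "u * Mplus (UJ J) a * adj u = l \<cdot>\<^sub>m a"
      unfolding nontriv_eigs_def by blast
    have tr: "a$$(1,1) = - a$$(0,0)" using a(2) a(1) unfolding mtrace_def by (simp add: sum2 eq_neg_iff_add_eq_0 add.commute)
    have nz: "(a$$(0,1), a$$(1,0), a$$(0,0)) \<noteq> (0,0,0)"
    proof
      assume "(a$$(0,1), a$$(1,0), a$$(0,0)) = (0,0,0)"
      then have "a = 0\<^sub>m 2 2" using tr a(1) by (intro eq_matI) (auto simp: less2)
      with a(3) show False by simp
    qed
    have E: "\<And>i j. i < 2 \<Longrightarrow> j < 2 \<Longrightarrow> (u * Mplus (UJ J) a * adj u) $$ (i,j) = l * a $$ (i,j)"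
      using a(4) a(1) by simp
    have e01: "p * a$$(0,0) * cnj r + p * (s*a$$(0,1)) * cnj t + q * (s*a$$(1,0)) * cnj r + q * a$$(1,1) * cnj t = l * a$$(0,1)"
      using E[of 0 1] unfolding Phi[OF a(1)] by simp
    have e10: "r * a$$(0,0) * cnj p + r * (s*a$$(0,1)) * cnj q + t * (s*a$$(1,0)) * cnj p + t * a$$(1,1) * cnj q = l * a$$(1,0)"
      using E[of 1 0] unfolding Phi[OF a(1)] by simp
    have e00: "p * a$$(0,0) * cnj p + p * (s*a$$(0,1)) * cnj q + q * (s*a$$(1,0)) * cnj p + q * a$$(1,1) * cnj q = l * a$$(0,0)"
      using E[of 0 0] unfolding Phi[OF a(1)] by simp
    show "\<exists>x y z. (x,y,z) \<noteq> (0,0,0) \<and>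
     (s*(p*cnj t) - l)*x + (s*(q*cnj r))*y + (p*cnj r - q*cnj t)*z = 0 \<and>
     (s*(r*cnj q))*x + (s*(t*cnj p) - l)*y + (r*cnj p - t*cnj q)*z = 0 \<and>
     (s*(p*cnj q))*x + (s*(q*cnj p))*y + (p*cnj p - q*cnj q - l)*z = 0"
      apply (rule exI[of _ "a$$(0,1)"], rule exI[of _ "a$$(1,0)"], rule exI[of _ "a$$(0,0)"])
      apply (intro conjI)
      subgoal using nz by simp
      subgoal using e01 unfolding tr by (simp add: algebra_simps)
      subgoal using e10 unfolding tr by (simp add: algebra_simps)
      subgoal using e00 unfolding tr by (simp add: algebra_simps)
      done
  next
    assume "\<exists>x y z. (x,y,z) \<noteq> (0,0,0) \<and>
     (s*(p*cnj t) - l)*x + (s*(q*cnj r))*y + (p*cnj r - q*cnj t)*z = 0 \<and>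
     (s*(r*cnj q))*x + (s*(t*cnj p) - l)*y + (r*cnj p - t*cnj q)*z = 0 \<and>
     (s*(p*cnj q))*x + (s*(q*cnj p))*y + (p*cnj p - q*cnj q - l)*z = 0"
    then obtain x y z where xyz: "(x,y,z) \<noteq> (0,0,0)"
     "(s*(p*cnj t) - l)*x + (s*(q*cnj r))*y + (p*cnj r - q*cnj t)*z = 0"
     "(s*(r*cnj q))*x + (s*(t*cnj p) - l)*y + (r*cnj p - t*cnj q)*z = 0"
     "(s*(p*cnj q))*x + (s*(q*cnj p))*y + (p*cnj p - q*cnj q - l)*z = 0" by blast
    define a where "a = mat 2 2 (\<lambda>(i,j). [[z,x],[y,-z]]!i!j)"
    have a: "a \<in> carrier_mat 2 2" unfolding a_def by simp
    have tr: "mtrace a = 0" unfolding a_def mtrace_def by (simp add: sum2)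
    have nz: "a \<noteq> 0\<^sub>m 2 2"
    proof
      assume "a = 0\<^sub>m 2 2"
      then have "a$$(0,0) = 0" "a$$(0,1) = 0" "a$$(1,0) = 0" by auto
      then show False using xyz(1) unfolding a_def by simp
    qed
    have oc: "r * cnj t = - p * cnj q" using orth by (simp add: eq_neg_iff_add_eq_0 add.commute)
    have oc2: "t * cnj r = - q * cnj p" using arg_cong[OF orth, of cnj] by (simp add: eq_neg_iff_add_eq_0 mult.commute add.commute)
    have nrm2: "r * cnj r - t * cnj t = - (p * cnj p - q * cnj q)" using nrm by (simp add: algebra_simps)
    have f01: "p * z * cnj r + p * (s*x) * cnj t + q * (s*y) * cnj r + q * (-z) * cnj t = l * x"
      using xyz(2) by (simp add: algebra_simps)
    have f10: "r * z * cnj p + r * (s*x) * cnj q + t * (s*y) * cnj p + t * (-z) * cnj q = l * y"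
      using xyz(3) by (simp add: algebra_simps)
    have f00: "p * z * cnj p + p * (s*x) * cnj q + q * (s*y) * cnj p + q * (-z) * cnj q = l * z"
      using xyz(4) by (simp add: algebra_simps)
    have "r * z * cnj r + r * (s*x) * cnj t + t * (s*y) * cnj r + t * (-z) * cnj t
       = z * (r * cnj r - t * cnj t) + s * x * (r * cnj t) + s * y * (t * cnj r)" by (simp add: algebra_simps)
    also have "\<dots> = - (p * z * cnj p + p * (s*x) * cnj q + q * (s*y) * cnj p + q * (-z) * cnj q)"
      unfolding nrm2 oc oc2 by (simp add: algebra_simps)
    finally have f11': "r * z * cnj r + r * (s*x) * cnj t + t * (s*y) * cnj r + t * (-z) * cnj t = - (p * z * cnj p + p * (s*x) * cnj q + q * (s*y) * cnj p + q * (-z) * cnj q)" .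
    have f11: "r * z * cnj r + r * (s*x) * cnj t + t * (s*y) * cnj r + t * (-z) * cnj t = l * (-z)"
      using f11' f00 by (metis mult_minus_right)
    have "u * Mplus (UJ J) a * adj u = l \<cdot>\<^sub>m a"
      unfolding Phi[OF a]
      apply (rule eq_matI)
      using f01 f10 f00 f11 unfolding a_def
      by (auto simp: less2)
    then show "l \<in> nontriv_eigs (\<lambda>a. u * Mplus (UJ J) a * adj u)"
      unfolding nontriv_eigs_def using a tr nz by blast
  qed
qed

lemma v_alg:
  fixes A B s l :: complex
  assumes "A \<noteq> 0" "B \<noteq> 0"
  shows "Mdet s l (A*A/2) (1/(2*A*A)) (1/2) (1/2) (1/(2*A*B)) (-1/(2*A*B)) (-B/(2*A)) (-B*B/2) (-1/(2*B*B)) (-A/(2*B)) (A*B/2) (-A*B/2)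
    = - (l^3 - (l^2 - l) * (((A*A + 1/(A*A))/2) * s) - s^2)"
  using assms unfolding Mdet_def by (simp add: field_simps power2_eq_square power3_eq_cube)

lemma w_alg:
  fixes B c sn s l :: complex
  assumes "B \<noteq> 0" and cs: "c*c + sn*sn = 1"
  shows "Mdet s l (c*c) (c*c) (c*c) (sn*sn) (sn*c/B) (-(c*sn/B)) (-(B*sn*c)) (-(B*B*sn*sn)) (-(sn*sn/(B*B))) (-(c*sn/B)) (c*sn*B) (-(B*sn*c))
    = - ((l - s)*(l^2 - (c*c - sn*sn)*(1+s)*l + s))"
proof -
  have r1: "sn * sn = 1 - c*c" using cs by (auto simp: algebra_simps eq_diff_eq)
  have r2: "sn * (sn * x) = (1 - c*c) * x" for x using r1 by (metis mult.assoc)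
  show ?thesis using assms(1) unfolding Mdet_def
    apply (simp add: field_simps power2_eq_square power3_eq_cube)
    apply (simp add: algebra_simps r1 r2)
    done
qed

lemma hh: "(1/complex_of_real (sqrt 2)) * (1/complex_of_real (sqrt 2)) = 1/2"
  by (simp flip: of_real_mult)

lemma hprod: "((1/complex_of_real (sqrt 2)) * X) * ((1/complex_of_real (sqrt 2)) * Y) = X*Y/2"
proof -
  have "((1/complex_of_real (sqrt 2)) * X) * ((1/complex_of_real (sqrt 2)) * Y)
     = ((1/complex_of_real (sqrt 2)) * (1/complex_of_real (sqrt 2))) * (X*Y)" by (simp only: mult_ac)
  then show ?thesis unfolding hh by simp
qed

lemma cis_neg_inv: "cis (-x) = 1 / cis x"
  by (simp add: divide_inverse)

lemma cis_neg_inv2: "cis (-x/2) = 1 / cis (x/2)"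
  by (metis cis_neg_inv minus_divide_left)

lemma vmat_entries:
  "vmat \<phi> \<psi> \<in> carrier_mat 2 2"
  "vmat \<phi> \<psi> $$ (0,0) = (1/complex_of_real (sqrt 2)) * cis (\<phi>/2)"
  "vmat \<phi> \<psi> $$ (0,1) = (1/complex_of_real (sqrt 2)) * (- cis (\<psi>/2))"
  "vmat \<phi> \<psi> $$ (1,0) = (1/complex_of_real (sqrt 2)) * cis (-\<psi>/2)"
  "vmat \<phi> \<psi> $$ (1,1) = (1/complex_of_real (sqrt 2)) * cis (-\<phi>/2)"
  unfolding vmat_def mat_of_rows_list_def
  by auto

lemma v_eig:
  "l \<in> nontriv_eigs (\<lambda>a. vmat \<phi> \<psi> * Mplus (UJ J) a * adj (vmat \<phi> \<psi>)) \<longleftrightarrow>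
   l^3 - (l^2 - l) * complex_of_real (cos \<phi> * sin (2*J)) - complex_of_real ((sin (2*J))^2) = 0"
proof -
  define h where "h = 1/complex_of_real (sqrt 2)"
  define A where "A = cis (\<phi>/2)"
  define B where "B = cis (\<psi>/2)"
  have A0: "A \<noteq> 0" and B0: "B \<noteq> 0" unfolding A_def B_def by auto
  have cA: "cnj A = 1/A" and cB: "cnj B = 1/B" unfolding A_def B_def by (simp_all add: cis_cnj cis_neg_inv)
  have ch: "cnj h = h" unfolding h_def by simp
  have hp: "(h*X)*(h*Y) = X*Y/2" for X Y unfolding h_def by (rule hprod)
  note E = vmat_entries[of \<phi> \<psi>, unfolded cis_neg_inv2, folded h_def A_def B_def]
  have cos: "complex_of_real (cos \<phi>) = (A*A + 1/(A*A))/2"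
  proof -
    have "A*A = cis \<phi>" unfolding A_def by (simp add: cis_mult)
    moreover have "1/(A*A) = cis (-\<phi>)" unfolding A_def by (simp add: cis_mult cis_neg_inv)
    ultimately show ?thesis by (simp add: complex_eq_iff)
  qed
  have orth: "(h*A) * cnj (h*(-B)) + (h*(1/B)) * cnj (h*(1/A)) = 0"
    unfolding complex_cnj_mult ch cA cB complex_cnj_divide complex_cnj_minus complex_cnj_one
    using A0 B0 by (simp add: field_simps)
  have nrm: "(h*A) * cnj (h*A) + (h*(1/B)) * cnj (h*(1/B)) = (h*(-B)) * cnj (h*(-B)) + (h*(1/A)) * cnj (h*(1/A))"
    unfolding complex_cnj_mult ch cA cB complex_cnj_divide complex_cnj_minus complex_cnj_one
    using A0 B0 by (simp add: field_simps)
  have "l \<in> nontriv_eigs (\<lambda>a. vmat \<phi> \<psi> * Mplus (UJ J) a * adj (vmat \<phi> \<psi>)) \<longleftrightarrow>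
     Mx (complex_of_real (sin (2*J))) (h*A) (h*(-B)) (h*(1/B)) (h*(1/A)) l = 0"
    by (rule eig_general[OF E orth nrm])
  also have "Mx (complex_of_real (sin (2*J))) (h*A) (h*(-B)) (h*(1/B)) (h*(1/A)) l
     = Mdet (complex_of_real (sin (2*J))) l (A*A/2) (1/(2*A*A)) (1/2) (1/2) (1/(2*A*B)) (-1/(2*A*B)) (-B/(2*A)) (-B*B/2) (-1/(2*B*B)) (-A/(2*B)) (A*B/2) (-A*B/2)"
    unfolding Mx_def complex_cnj_mult ch cA cB complex_cnj_divide complex_cnj_minus complex_cnj_one hp
    using A0 B0 by (simp add: field_simps)
  also have "\<dots> = - (l^3 - (l^2 - l) * (((A*A + 1/(A*A))/2) * complex_of_real (sin (2*J))) - (complex_of_real (sin (2*J)))^2)"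
    by (rule v_alg[OF A0 B0])
  finally have X: "l \<in> nontriv_eigs (\<lambda>a. vmat \<phi> \<psi> * Mplus (UJ J) a * adj (vmat \<phi> \<psi>)) \<longleftrightarrow>
    - (l^3 - (l^2 - l) * (complex_of_real (cos \<phi>) * complex_of_real (sin (2*J))) - (complex_of_real (sin (2*J)))^2) = 0"
    unfolding cos[symmetric] .
  show ?thesis unfolding X of_real_mult of_real_power neg_equal_0_iff_equal by (rule refl)
qed

lemma wmat_entries:
  "wmat \<theta> \<psi> \<in> carrier_mat 2 2"
  "wmat \<theta> \<psi> $$ (0,0) = complex_of_real (cos (\<theta>/2))"
  "wmat \<theta> \<psi> $$ (0,1) = - (cis (\<psi>/2) * complex_of_real (sin (\<theta>/2)))"
  "wmat \<theta> \<psi> $$ (1,0) = (1 / cis (\<psi>/2)) * complex_of_real (sin (\<theta>/2))"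
  "wmat \<theta> \<psi> $$ (1,1) = complex_of_real (cos (\<theta>/2))"
  unfolding wmat_def mat_of_rows_list_def cis_neg_inv2[symmetric]
  by auto

lemma w_eig:
  "l \<in> nontriv_eigs (\<lambda>a. wmat \<theta> \<psi> * Mplus (UJ J) a * adj (wmat \<theta> \<psi>)) \<longleftrightarrow>
   (l - complex_of_real (sin (2*J))) * (l^2 - complex_of_real (cos \<theta>) * (1 + complex_of_real (sin (2*J))) * l + complex_of_real (sin (2*J))) = 0"
proof -
  define c where "c = complex_of_real (cos (\<theta>/2))"
  define sn where "sn = complex_of_real (sin (\<theta>/2))"
  define B where "B = cis (\<psi>/2)"
  define s where "s = complex_of_real (sin (2*J))"
  have B0: "B \<noteq> 0" unfolding B_def by auto
  have cB: "cnj B = 1/B" unfolding B_def by (simp add: cis_cnj cis_neg_inv)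
  have cc: "cnj c = c" "cnj sn = sn" unfolding c_def sn_def by simp_all
  have cs: "c*c + sn*sn = 1" unfolding c_def sn_def
    using arg_cong[OF sin_cos_squared_add3[of "\<theta>/2"], of complex_of_real]
    unfolding of_real_add of_real_mult of_real_1 .
  have cos: "complex_of_real (cos \<theta>) = c*c - sn*sn" unfolding c_def sn_def
  proof -
    have "cos \<theta> = cos (2*(\<theta>/2))" by simp
    also have "\<dots> = cos (\<theta>/2) * cos (\<theta>/2) - sin (\<theta>/2) * sin (\<theta>/2)" by (simp only: cos_double power2_eq_square)
    finally show "complex_of_real (cos \<theta>) = complex_of_real (cos (\<theta> / 2)) * complex_of_real (cos (\<theta> / 2)) - complex_of_real (sin (\<theta> / 2)) * complex_of_real (sin (\<theta> / 2))"
      by (simp flip: of_real_mult of_real_diff)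
  qed
  note E = wmat_entries[of \<theta> \<psi>, folded c_def sn_def B_def]
  have orth: "c * cnj (- (B * sn)) + (1/B * sn) * cnj c = 0"
    unfolding complex_cnj_mult cc cB complex_cnj_divide complex_cnj_minus complex_cnj_one
    using B0 by (simp add: field_simps)
  have nrm: "c * cnj c + (1/B * sn) * cnj (1/B * sn) = (- (B * sn)) * cnj (- (B * sn)) + c * cnj c"
    unfolding complex_cnj_mult cc cB complex_cnj_divide complex_cnj_minus complex_cnj_one
    using B0 by (simp add: field_simps)
  have "l \<in> nontriv_eigs (\<lambda>a. wmat \<theta> \<psi> * Mplus (UJ J) a * adj (wmat \<theta> \<psi>)) \<longleftrightarrow>
     Mx s c (- (B * sn)) (1/B * sn) c l = 0"
    unfolding s_def by (rule eig_general[OF E orth nrm])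
  also have "Mx s c (- (B * sn)) (1/B * sn) c l
     = Mdet s l (c*c) (c*c) (c*c) (sn*sn) (sn*c/B) (-(c*sn/B)) (-(B*sn*c)) (-(B*B*sn*sn)) (-(sn*sn/(B*B))) (-(c*sn/B)) (c*sn*B) (-(B*sn*c))"
    unfolding Mx_def complex_cnj_mult cc cB complex_cnj_divide complex_cnj_minus complex_cnj_one
    using B0 by (simp add: field_simps)
  also have "\<dots> = - ((l - s)*(l^2 - (c*c - sn*sn)*(1+s)*l + s))"
    by (rule w_alg[OF B0 cs])
  finally show ?thesis unfolding cos s_def by simp
qed

lemma swap_eq: "swap = mat 4 4 (\<lambda>(r,c). if r = 2*(c mod 2) + c div 2 then 1 else 0)"
  by (simp add: swap_def)

lemma Eop_swap: "Eop swap = 3/4"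
  unfolding Eop_def mtrace_def realign_def swap_def adj_def
  by (simp add: sum4 sum4' scalar_prod_def)

lemma cis_cnj_sq: "cis x * (cis x * (cnj (cis x) * cnj (cis x))) = 1"
proof -
  have "cis x * (cis x * (cnj (cis x) * cnj (cis x))) = (cnj (cis x) * cis x) * (cnj (cis x) * cis x)"
    by (simp only: mult_ac)
  also have "cnj (cis x) * cis x = 1" by (simp add: cis_cnj cis_mult)
  finally show ?thesis by simp
qed

lemma Eop_UJ: "Eop (UJ J) = 3/4"
  unfolding Eop_def mtrace_def realign_def UJ_eq adj_def
  apply (simp add: sum4 sum4' scalar_prod_def)
  apply (simp only: cis_cnj_sq)
  apply simp
  done

lemma g4: "x * (\<i> * y) - \<i> * z * w = \<i> * (x * y - z * w)"
  by (simp add: algebra_simps)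
lemma g5: "x * y - \<i> * z * (\<i> * w) = x * y + z * w"
  by (simp add: algebra_simps)

lemma Eop_UJS: "Eop (UJ J * swap) = complex_of_real ((cos (2*J))^2) / 2"
proof -
  have t1: "cis (- J) * (\<i> * cnj (cis J)) - \<i> * cis J * cnj (cis (- J)) = 2*complex_of_real(sin(2*J))"
  proof -
    have a: "cis (- J) * cnj (cis J) = cis (-(2*J))" by (simp add: cis_cnj cis_mult)
    have b: "cis J * cnj (cis (- J)) = cis (2*J)" by (simp add: cis_cnj cis_mult)
    show ?thesis unfolding g4 a b
      using arg_cong[OF cis_diff[of J], of "\<lambda>x. - \<i> * x"] by (simp add: algebra_simps)
  qed
  have t2: "cis (- J) * cnj (cis (- J)) - \<i> * cis J * (\<i> * cnj (cis J)) = 2"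
    unfolding g5 by (simp add: cis_cnj cis_mult)
  have t3: "(complex_of_real (cos (2*J)))^2 = 1 - (complex_of_real (sin (2*J)))^2"
    by (simp add: cos_squared_eq flip: of_real_power)
  show ?thesis
  unfolding Eop_def mtrace_def realign_def UJ_eq adj_def swap_def
  apply (simp add: sum4 sum4' scalar_prod_def)
  apply (simp only: t1 t2 t3)
  apply (simp add: field_simps power2_eq_square)
  done
qed

lemma quad_fact: fixes b c :: complex
  shows "\<exists>l2 l3. (\<forall>l. l^2 - b*l + c = (l - l2)*(l - l3)) \<and> l2*l3 = c"
proof -
  define d where "d = csqrt (b^2 - 4*c)"
  have d2: "d^2 = b^2 - 4*c" unfolding d_def by simp
  define l2 where "l2 = (b + d)/2"
  define l3 where "l3 = (b - d)/2"
  have p: "l2*l3 = c" unfolding l2_def l3_def using d2 by (simp add: field_simps power2_eq_square)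
  have "l^2 - b*l + c = (l - l2)*(l - l3)" for l
    unfolding l2_def l3_def using d2 by (simp add: field_simps power2_eq_square)
  with p show ?thesis by blast
qed

lemma cubic_fact: fixes a b c :: complex
  shows "\<exists>l1 l2 l3. \<forall>l. l^3 + a*l^2 + b*l + c = (l - l1)*(l - l2)*(l - l3)"
proof -
  have "\<not> constant (poly [:c,b,a,1:])" unfolding constant_degree by simp
  then obtain l1 where "poly [:c,b,a,1:] l1 = 0" using fundamental_theorem_of_algebra by blast
  then have r: "c = - (l1^3 + a*l1^2 + b*l1)" by (simp add: algebra_simps power2_eq_square power3_eq_cube eq_neg_iff_add_eq_0)
  obtain l2 l3 where q: "\<forall>l. l^2 - (-(a+l1))*l + (b + l1*(a+l1)) = (l - l2)*(l - l3)"
    using quad_fact[of "-(a+l1)" "b + l1*(a+l1)"] by blast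
  have "l^3 + a*l^2 + b*l + c = (l - l1)*(l^2 - (-(a+l1))*l + (b + l1*(a+l1)))" for l
    unfolding r by (simp add: algebra_simps power2_eq_square power3_eq_cube)
  then have "l^3 + a*l^2 + b*l + c = (l - l1)*(l - l2)*(l - l3)" for l using q by (simp add: mult.assoc)
  then show ?thesis by blast
qed

lemma sqrt_le_max: fixes x y s :: real
  assumes "0 \<le> x" "0 \<le> y" "x*y = s" shows "sqrt s \<le> max x y"
proof -
  have "s \<le> (max x y)^2"
  proof (cases "x \<le> y")
    case True
    then have "x*y \<le> y*y" using assms by (intro mult_right_mono) auto
    then show ?thesis using True assms by (simp add: power2_eq_square max_def)
  next
    case False
    then have "x*y \<le> x*x" using assms by (intro mult_left_mono) auto
    then show ?thesis using False assms by (simp add: power2_eq_square max_def)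
  qed
  then have "sqrt s \<le> sqrt ((max x y)^2)" by (rule real_sqrt_le_mono)
  also have "\<dots> = max x y" using assms by simp
  finally show ?thesis .
qed

lemma Max_cmod_ge: "finite S \<Longrightarrow> x \<in> S \<Longrightarrow> cmod x \<le> Max (cmod ` S)"
  by (simp add: Max_ge)

lemma Max_cmod_le: "finite S \<Longrightarrow> S \<noteq> {} \<Longrightarrow> (\<And>x. x \<in> S \<Longrightarrow> cmod x \<le> B) \<Longrightarrow> Max (cmod ` S) \<le> B"
  by (simp add: Max_le_iff)

lemma powr23_cube: fixes s :: real assumes "0 \<le> s" shows "(s powr (2/3))^3 = s^2"
proof (cases "s = 0")
  case True then show ?thesis by simp
next
  case False
  then have "(s powr (2/3))^3 = s powr (of_nat 3 * (2/3))" by (rule powr_power)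
  also have "\<dots> = s powr 2" by simp
  also have "\<dots> = s^2" using assms by simp
  finally show ?thesis .
qed

lemma w_part:
  assumes s0: "0 \<le> sin (2*J)"
  shows "sqrt (sin (2*J)) \<le> Lam (UJ J) (wmat \<theta> \<psi>)"
proof -
  define sc where "sc = complex_of_real (sin (2*J))"
  define S where "S = nontriv_eigs (\<lambda>a. wmat \<theta> \<psi> * Mplus (UJ J) a * adj (wmat \<theta> \<psi>))"
  obtain l2 l3 where q: "\<forall>l. l^2 - (complex_of_real (cos \<theta>) * (1 + sc))*l + sc = (l-l2)*(l-l3)" and p: "l2*l3 = sc"
    using quad_fact by blast
  have S: "l \<in> S \<longleftrightarrow> l \<in> {sc, l2, l3}" for l
    using w_eig[of l \<theta> \<psi> J] q[rule_format, of l] unfolding S_def sc_def[symmetric] by auto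
  then have SS: "S = {sc, l2, l3}" by blast
  have pm: "cmod l2 * cmod l3 = sin (2*J)" using p s0 unfolding sc_def by (metis norm_mult norm_of_real abs_of_nonneg)
  have "sqrt (sin (2*J)) \<le> max (cmod l2) (cmod l3)" by (rule sqrt_le_max) (use pm in auto)
  also have "\<dots> \<le> Max (cmod ` S)" unfolding SS by (simp add: Max_cmod_ge)
  finally show ?thesis unfolding Lam_def S_def .
qed

lemma w_part2:
  assumes s0: "0 \<le> sin (2*J)" and s1: "sin (2*J) \<le> 1"
  shows "Lam (UJ J) (wmat (pi/2) 0) = sqrt (sin (2*J))"
proof -
  define sc where "sc = complex_of_real (sin (2*J))"
  define S where "S = nontriv_eigs (\<lambda>a. wmat (pi/2) 0 * Mplus (UJ J) a * adj (wmat (pi/2) 0))"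
  obtain l2 l3 where q: "\<forall>l. l^2 - (complex_of_real (cos (pi/2)) * (1 + sc))*l + sc = (l-l2)*(l-l3)" and p: "l2*l3 = sc"
    using quad_fact by blast
  have S: "l \<in> S \<longleftrightarrow> l \<in> {sc, l2, l3}" for l
    using w_eig[of l "pi/2" 0 J] q[rule_format, of l] unfolding S_def sc_def[symmetric] by auto
  then have SS: "S = {sc, l2, l3}" by blast
  have le: "cmod l \<le> sqrt (sin (2*J))" if "l \<in> S" for l
  proof -
    have "(l - sc) * (l^2 + sc) = 0" using that w_eig[of l "pi/2" 0 J] unfolding S_def sc_def[symmetric] by simp
    then have "l - sc = 0 \<or> l^2 + sc = 0" by simp
    then consider "l = sc" | "l^2 = - sc" by (auto simp: eq_neg_iff_add_eq_0)
    then show ?thesis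
    proof cases
      case 1
      have "sin (2*J) = sqrt (sin (2*J)) * sqrt (sin (2*J))" using s0 by simp
      also have "\<dots> \<le> sqrt (sin (2*J)) * 1" using s0 s1 by (intro mult_left_mono) auto
      finally show ?thesis using 1 s0 unfolding sc_def by simp
    next
      case 2
      then have "cmod l ^ 2 = sin (2*J)" unfolding sc_def using s0 by (metis norm_minus_cancel norm_of_real norm_power abs_of_nonneg)
      then show ?thesis by (metis norm_ge_zero real_sqrt_abs abs_of_nonneg order_refl)
    qed
  qed
  have "Max (cmod ` S) \<le> sqrt (sin (2*J))"
    by (rule Max_cmod_le) (use le SS in auto)
  moreover have "sqrt (sin (2*J)) \<le> Max (cmod ` S)" using w_part[OF s0, of "pi/2" 0] unfolding Lam_def S_def .
  ultimately show ?thesis unfolding Lam_def S_def by simp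
qed

lemma v_part:
  assumes s0: "0 \<le> sin (2*J)"
  shows "sin (2*J) powr (2/3) \<le> Lam (UJ J) (vmat \<phi> \<psi>)"
    and "\<phi> = pi/2 \<Longrightarrow> Lam (UJ J) (vmat \<phi> \<psi>) = sin (2*J) powr (2/3)"
proof -
  define s where "s = sin (2*J)"
  define K where "K = complex_of_real (cos \<phi> * sin (2*J))"
  define s2 where "s2 = complex_of_real ((sin (2*J))^2)"
  define S where "S = nontriv_eigs (\<lambda>a. vmat \<phi> \<psi> * Mplus (UJ J) a * adj (vmat \<phi> \<psi>))"
  obtain l1 l2 l3 where c: "\<forall>l. l^3 + (-K)*l^2 + K*l + (-s2) = (l - l1)*(l - l2)*(l - l3)"
    using cubic_fact by blast
  have eq: "l^3 - (l^2 - l) * K - s2 = l^3 + (-K)*l^2 + K*l + (-s2)" for l by (simp add: algebra_simps)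
  have S: "l \<in> S \<longleftrightarrow> l \<in> {l1, l2, l3}" for l
    using v_eig[of l \<phi> \<psi> J] c[rule_format, of l] unfolding S_def K_def[symmetric] s2_def[symmetric] eq by auto
  then have SS: "S = {l1, l2, l3}" by blast
  have fin: "finite S" unfolding SS by simp
  have prod: "l1*l2*l3 = s2" using c[rule_format, of 0] by (simp add: algebra_simps)
  have pm: "cmod l1 * cmod l2 * cmod l3 = s^2" using prod s0 unfolding s2_def s_def
    by (metis norm_mult norm_of_real abs_of_nonneg zero_le_power2 abs_power2)
  define m where "m = Max (cmod ` S)"
  have m1: "cmod l1 \<le> m" "cmod l2 \<le> m" "cmod l3 \<le> m" unfolding m_def using fin SS by (auto intro: Max_cmod_ge)
  have m0: "0 \<le> m" using m1 norm_ge_zero order_trans by blast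
  have "s^2 \<le> m * m * m" unfolding pm[symmetric] using m1 m0
    by (intro mult_mono) auto
  then have cube: "s^2 \<le> m^3" by (simp add: power3_eq_cube)
  show low: "s powr (2/3) \<le> Lam (UJ J) (vmat \<phi> \<psi>)" unfolding Lam_def S_def[symmetric] m_def[symmetric]
  proof (rule ccontr)
    assume "\<not> s powr (2/3) \<le> m"
    then have "m < s powr (2/3)" by simp
    then have "m^3 < (s powr (2/3))^3" using m0 by (intro power_strict_mono) auto
    with cube powr23_cube[of s] s0 show False unfolding s_def by simp
  qed
  assume phi: "\<phi> = pi/2"
  have all: "cmod l = s powr (2/3)" if "l \<in> S" for l
  proof -
    have "l^3 = s2" using that v_eig[of l \<phi> \<psi> J] phi unfolding S_def by (simp add: s2_def)
    then have "cmod l ^ 3 = s^2" unfolding s2_def s_def by (metis norm_power norm_of_real abs_of_nonneg zero_le_power2 abs_power2)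
    also have "\<dots> = (s powr (2/3))^3" using powr23_cube[of s] s0 unfolding s_def by simp
    finally show ?thesis by (rule power_eq_imp_eq_base) auto
  qed
  have "m \<le> s powr (2/3)" unfolding m_def by (rule Max_cmod_le) (use fin SS all in auto)
  with low show "Lam (UJ J) (vmat \<phi> \<psi>) = sin (2*J) powr (2/3)"
    unfolding Lam_def S_def[symmetric] m_def[symmetric] s_def by simp
qed

lemma ep_UJ: "ep (UJ J) = complex_of_real (2/3 * (cos (2*J))^2)"
  unfolding ep_def Eop_UJ Eop_UJS Eop_swap by (simp add: field_simps)

theorem mainTheorem10:
  fixes J :: real
  assumes "0 \<le> J" and "J \<le> pi/4"
  shows "ep (UJ J) = complex_of_real (2/3 * (cos (2*J))^2)
    \<and> ((\<forall>\<theta>\<in>{0..pi}. \<forall>\<psi>\<in>{0..4*pi}. sqrt (sin (2*J)) \<le> Lam (UJ J) (wmat \<theta> \<psi>))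
       \<and> (\<exists>\<theta>\<in>{0..pi}. \<exists>\<psi>\<in>{0..4*pi}. Lam (UJ J) (wmat \<theta> \<psi>) = sqrt (sin (2*J)))
       \<and> (0 < J \<longrightarrow> - ln (sqrt (sin (2*J))) = - (1/4) * ln (1 - 3/2 * Re (ep (UJ J)))))
    \<and> ((\<forall>\<phi>\<in>{0..4*pi}. \<forall>\<psi>\<in>{0..4*pi}. \<forall>l.
          l \<in> nontriv_eigs (\<lambda>a. vmat \<phi> \<psi> * Mplus (UJ J) a * adj (vmat \<phi> \<psi>)) \<longleftrightarrow>
          l^3 - (l^2 - l) * complex_of_real (cos \<phi> * sin (2*J)) - complex_of_real ((sin (2*J))^2) = 0)
       \<and> (\<forall>\<phi>\<in>{0..4*pi}. \<forall>\<psi>\<in>{0..4*pi}. sin (2*J) powr (2/3) \<le> Lam (UJ J) (vmat \<phi> \<psi>))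
       \<and> (\<exists>\<psi>\<in>{0..4*pi}. Lam (UJ J) (vmat (pi/2) \<psi>) = sin (2*J) powr (2/3))
       \<and> (0 < J \<longrightarrow> - ln (sin (2*J) powr (2/3)) = - (1/3) * ln (1 - 3/2 * Re (ep (UJ J)))))"
proof -
  have s0: "0 \<le> sin (2*J)" using assms by (intro sin_ge_zero) auto
  have s1: "sin (2*J) \<le> 1" by simp
  have re: "1 - 3/2 * Re (ep (UJ J)) = (sin (2*J))^2"
    unfolding ep_UJ by (simp add: sin_squared_eq)
  have lnA: "- ln (sqrt (sin (2*J))) = - (1/4) * ln (1 - 3/2 * Re (ep (UJ J)))" if "0 < J"
  proof -
    have sp: "0 < sin (2*J)" using that assms by (intro sin_gt_zero) auto
    show ?thesis unfolding re using sp by (simp add: ln_sqrt ln_realpow)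
  qed
  have lnB: "- ln (sin (2*J) powr (2/3)) = - (1/3) * ln (1 - 3/2 * Re (ep (UJ J)))" if "0 < J"
  proof -
    have sp: "0 < sin (2*J)" using that assms by (intro sin_gt_zero) auto
    show ?thesis unfolding re using sp by (simp add: ln_realpow)
  qed
  have ex1: "\<exists>\<theta>\<in>{0..pi}. \<exists>\<psi>\<in>{0..4*pi}. Lam (UJ J) (wmat \<theta> \<psi>) = sqrt (sin (2*J))"
    by (rule bexI[of _ "pi/2"], rule bexI[of _ 0]) (use w_part2[OF s0 s1] in auto)
  have ex2: "\<exists>\<psi>\<in>{0..4*pi}. Lam (UJ J) (vmat (pi/2) \<psi>) = sin (2*J) powr (2/3)"
    by (rule bexI[of _ 0]) (use v_part(2)[OF s0] in auto)
  show ?thesis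
    using ep_UJ w_part[OF s0] ex1 lnA v_eig v_part(1)[OF s0] ex2 lnB by blast
qed

end
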